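(* Let $P,Q\in\mathbb{T}^{r\times r}$ such that every column of $P$ and $Q^\top$ has at least one entry distinct from $-\infty$. Suppose that every column of $P$ and $Q^\top$ has a unique maximizing entry. Then there are at most $2^r-1$ tropical Nash equilibria.
   Context: $\mathbb{T}=\mathbb{R}\cup\{-\infty\}$ is the max-plus semifield ($\oplus=\max$, $\odot=+$), and $\Delta^{\mathrm{trop}}_p=\{z\in\mathbb{T}^{p+1}:\bigoplus_k z_k=0\}$. A tropical Nash equilibrium of $(P,Q)$ is a pair $(x^*,y^* )\in\Delta^{\mathrm{trop}}_{r-1}\times\Delta^{\mathrm{trop}}_{r-1}$ such that for all $i$, $x^*_i>-\infty$ implies $(P\odot y^* )_i\geq(P\odot y^* )_k$ for all $k$, and for all $j$, $y^*_j>-\infty$ implies $(Q^\top\odot x^* )_j\geq(Q^\top\odot x^* )_l$ for all $l$. *)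

theory Defs
  imports "HOL-Library.Extended_Real"
begin

text \<open>Max-plus semifield T = R \<union> {-\<infinity>} is modelled inside ereal by excluding \<infinity>.
  Vectors of T^r are functions nat \<Rightarrow> ereal, indices 0..r-1, padded with -\<infinity> outside.
  Matrices of T^(r x r) are functions nat \<Rightarrow> nat \<Rightarrow> ereal (row, column).
  The tropical sum over a finite index set is Sup (empty sum = -\<infinity>).\<close>

definition trop_simplex :: "nat \<Rightarrow> (nat \<Rightarrow> ereal) set" where
  "trop_simplex r = {z. (\<forall>k. r \<le> k \<longrightarrow> z k = -\<infinity>) \<and> (\<forall>k<r. z k \<noteq> \<infinity>)
                        \<and> (SUP k\<in>{..<r}. z k) = 0}"

definition trop_mv :: "nat \<Rightarrow> (nat \<Rightarrow> nat \<Rightarrow> ereal) \<Rightarrow> (nat \<Rightarrow> ereal) \<Rightarrow> nat \<Rightarrow> ereal" where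
  "trop_mv r P y i = (SUP k\<in>{..<r}. P i k + y k)"

definition trop_transpose :: "(nat \<Rightarrow> nat \<Rightarrow> ereal) \<Rightarrow> nat \<Rightarrow> nat \<Rightarrow> ereal" where
  "trop_transpose Q i j = Q j i"

definition trop_nash :: "nat \<Rightarrow> (nat \<Rightarrow> nat \<Rightarrow> ereal) \<Rightarrow> (nat \<Rightarrow> nat \<Rightarrow> ereal)
    \<Rightarrow> (nat \<Rightarrow> ereal) \<Rightarrow> (nat \<Rightarrow> ereal) \<Rightarrow> bool" where
  "trop_nash r P Q x y \<longleftrightarrow> x \<in> trop_simplex r \<and> y \<in> trop_simplex r
     \<and> (\<forall>i<r. x i > -\<infinity> \<longrightarrow> (\<forall>k<r. trop_mv r P y i \<ge> trop_mv r P y k))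
     \<and> (\<forall>j<r. y j > -\<infinity> \<longrightarrow>
          (\<forall>l<r. trop_mv r (trop_transpose Q) x j \<ge> trop_mv r (trop_transpose Q) x l))"

definition trop_matrix :: "nat \<Rightarrow> (nat \<Rightarrow> nat \<Rightarrow> ereal) \<Rightarrow> bool" where
  "trop_matrix r M \<longleftrightarrow> (\<forall>i<r. \<forall>j<r. M i j \<noteq> \<infinity>)"

definition cols_nonbot :: "nat \<Rightarrow> (nat \<Rightarrow> nat \<Rightarrow> ereal) \<Rightarrow> bool" where
  "cols_nonbot r M \<longleftrightarrow> (\<forall>j<r. \<exists>i<r. M i j \<noteq> -\<infinity>)"

definition cols_unique_max :: "nat \<Rightarrow> (nat \<Rightarrow> nat \<Rightarrow> ereal) \<Rightarrow> bool" where
  "cols_unique_max r M \<longleftrightarrow> (\<forall>j<r. \<exists>!i. i < r \<and> (\<forall>k<r. M k j \<le> M i j))"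

end

theory Submission
  imports Defs
begin

lemma sup_in: "finite (A::ereal set) \<Longrightarrow> A \<noteq> {} \<Longrightarrow> Sup A \<in> A"
  using Max_Sup Max_eq_iff by auto

definition sig :: "nat \<Rightarrow> (nat \<Rightarrow> nat \<Rightarrow> ereal) \<Rightarrow> nat \<Rightarrow> nat" where
  "sig r A j = (THE i. i < r \<and> (\<forall>k<r. A k j \<le> A i j))"

definition cm :: "nat \<Rightarrow> (nat \<Rightarrow> nat \<Rightarrow> ereal) \<Rightarrow> nat \<Rightarrow> ereal" where
  "cm r A j = A (sig r A j) j"

definition supp :: "nat \<Rightarrow> (nat \<Rightarrow> ereal) \<Rightarrow> nat set" where
  "supp r x = {i. i < r \<and> x i \<noteq> -\<infinity>}"

definition best :: "nat \<Rightarrow> (nat \<Rightarrow> nat \<Rightarrow> ereal) \<Rightarrow> (nat \<Rightarrow> ereal) \<Rightarrow> nat set" where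
  "best r A y = {j. j < r \<and> y j \<noteq> -\<infinity> \<and> (\<forall>j'<r. cm r A j' + y j' \<le> cm r A j + y j)}"

lemma simplex_props:
  assumes "y \<in> trop_simplex r"
  shows "\<forall>k<r. y k \<le> 0" "\<exists>k<r. y k = 0" "\<forall>k. r \<le> k \<longrightarrow> y k = -\<infinity>" "\<forall>k<r. y k \<noteq> \<infinity>"
proof -
  have S: "(SUP k\<in>{..<r}. y k) = 0" and o: "\<forall>k. r \<le> k \<longrightarrow> y k = -\<infinity>" and f: "\<forall>k<r. y k \<noteq> \<infinity>"
    using assms unfolding trop_simplex_def by auto
  show "\<forall>k<r. y k \<le> 0" using S by (metis SUP_upper lessThan_iff)
  have "{..<r} \<noteq> {}"
  proof
    assume "{..<r} = {}"
    then have "(SUP k\<in>{..<r}. y k) = -\<infinity>" by (simp add: bot_ereal_def)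
    then show False using S by simp
  qed
  then have "(SUP k\<in>{..<r}. y k) \<in> y ` {..<r}" by (intro sup_in) auto
  then show "\<exists>k<r. y k = 0" using S by auto
  show "\<forall>k. r \<le> k \<longrightarrow> y k = -\<infinity>" using o .
  show "\<forall>k<r. y k \<noteq> \<infinity>" using f .
qed

lemma sig_props:
  assumes "cols_unique_max r A" "j < r"
  shows "sig r A j < r" "\<forall>k<r. A k j \<le> cm r A j"
    "\<And>i. i < r \<Longrightarrow> \<forall>k<r. A k j \<le> A i j \<Longrightarrow> i = sig r A j"
proof -
  have ex: "\<exists>!i. i < r \<and> (\<forall>k<r. A k j \<le> A i j)" using assms unfolding cols_unique_max_def by auto
  then have th: "sig r A j < r \<and> (\<forall>k<r. A k j \<le> A (sig r A j) j)"
    unfolding sig_def by (rule theI')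
  then show "sig r A j < r" "\<forall>k<r. A k j \<le> cm r A j" unfolding cm_def by auto
  show "\<And>i. i < r \<Longrightarrow> \<forall>k<r. A k j \<le> A i j \<Longrightarrow> i = sig r A j"
    using ex th by blast
qed

lemma cm_fin:
  assumes "trop_matrix r A" "cols_nonbot r A" "cols_unique_max r A" "j < r"
  shows "cm r A j \<noteq> -\<infinity>" "cm r A j \<noteq> \<infinity>"
proof -
  obtain i where "i < r" "A i j \<noteq> -\<infinity>" using assms(2,4) unfolding cols_nonbot_def by auto
  moreover have "A i j \<le> cm r A j" using sig_props(2)[OF assms(3,4)] \<open>i < r\<close> by auto
  ultimately show "cm r A j \<noteq> -\<infinity>" by auto
  show "cm r A j \<noteq> \<infinity>" using assms(1,4) sig_props(1)[OF assms(3,4)]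
    unfolding trop_matrix_def cm_def by auto
qed

lemma argmax_in_best:
  assumes "trop_matrix r A" "cols_nonbot r A" "cols_unique_max r A"
    and y: "y \<in> trop_simplex r" and i: "i < r"
    and mx: "\<forall>k<r. trop_mv r A y k \<le> trop_mv r A y i"
  shows "i \<in> sig r A ` best r A y"
proof -
  have ne: "{..<r} \<noteq> {}" using i by auto
  have "trop_mv r A y i \<in> (\<lambda>k. A i k + y k) ` {..<r}"
    unfolding trop_mv_def by (rule sup_in) (use ne in auto)
  then obtain j where j: "j < r" "trop_mv r A y i = A i j + y j" by auto
  have le_tm: "A k j' + y j' \<le> trop_mv r A y k" if "j' < r" for k j'
    unfolding trop_mv_def using that by (intro SUP_upper) auto
  have chain: "cm r A j' + y j' \<le> A i j + y j" if "j' < r" for j'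
  proof -
    have "cm r A j' + y j' \<le> trop_mv r A y (sig r A j')"
      unfolding cm_def by (rule le_tm[OF that])
    also have "\<dots> \<le> trop_mv r A y i" using mx sig_props(1)[OF assms(3) that] by auto
    finally show ?thesis using j by simp
  qed
  have Aij: "A i j \<le> cm r A j" using sig_props(2)[OF assms(3) j(1)] i by auto
  obtain j0 where j0: "j0 < r" "y j0 = 0" using simplex_props(2)[OF y] by auto
  have "cm r A j0 + y j0 \<le> A i j + y j" by (rule chain[OF j0(1)])
  then have ne: "A i j + y j \<noteq> -\<infinity>" using cm_fin(1)[OF assms(1-3) j0(1)] j0(2)
    by (metis add.right_neutral ereal_infty_less_eq(2))
  have yj2: "y j \<noteq> \<infinity>" using simplex_props(4)[OF y] j(1) by auto
  have Ainf: "A i j \<noteq> \<infinity>" using assms(1) i j(1) unfolding trop_matrix_def by auto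
  have yj: "y j \<noteq> -\<infinity>"
  proof
    assume "y j = -\<infinity>"
    then have "A i j + y j = -\<infinity>" using Ainf by simp
    then show False using ne by simp
  qed
  have "cm r A j + y j \<le> A i j + y j" by (rule chain[OF j(1)])
  then have "cm r A j \<le> A i j" using yj yj2
    by (metis ereal_add_le_add_iff2)
  then have "A i j = cm r A j" using Aij by auto
  then have "i = sig r A j" using sig_props(2,3)[OF assms(3) j(1)] i by auto
  moreover have "j \<in> best r A y"
    unfolding best_def using j(1) yj chain \<open>A i j = cm r A j\<close> by auto
  ultimately show ?thesis by auto
qed

lemma best_unique:
  assumes "trop_matrix r A" "cols_nonbot r A" "cols_unique_max r A"
    and y: "y \<in> trop_simplex r" and y': "y' \<in> trop_simplex r"
    and s: "supp r y = supp r y'" and b: "best r A y = supp r y" and b': "best r A y' = supp r y'"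
  shows "y = y'"
proof
  fix k
  show "y k = y' k"
  proof (cases "k \<in> supp r y")
    case False
    then show ?thesis using s simplex_props(3)[OF y] simplex_props(3)[OF y'] unfolding supp_def
      by (metis (mono_tags, lifting) mem_Collect_eq not_le)
  next
    case True
    obtain j0 where j0: "j0 < r" "y j0 = 0" using simplex_props(2)[OF y] by auto
    obtain j1 where j1: "j1 < r" "y' j1 = 0" using simplex_props(2)[OF y'] by auto
    have j1s: "j1 \<in> supp r y'" using j1 by (simp add: supp_def)
    have j0s': "j0 \<in> supp r y" using j0 by (simp add: supp_def)
    have j0s: "j0 \<in> supp r y" "j1 \<in> supp r y" using j0s' j1s s by simp_all
    have E: "\<And>a c. a \<in> supp r y \<Longrightarrow> c \<in> supp r y \<Longrightarrow> cm r A a + y a = cm r A c + y c"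
      using b unfolding best_def supp_def by (auto intro: antisym)
    have E': "\<And>a c. a \<in> supp r y \<Longrightarrow> c \<in> supp r y \<Longrightarrow> cm r A a + y' a = cm r A c + y' c"
      using b' s unfolding best_def supp_def by (auto intro: antisym)
    have fin: "\<And>a. a \<in> supp r y \<Longrightarrow> \<bar>y a\<bar> \<noteq> \<infinity> \<and> \<bar>y' a\<bar> \<noteq> \<infinity> \<and> \<bar>cm r A a\<bar> \<noteq> \<infinity>"
      using s simplex_props(4)[OF y] simplex_props(4)[OF y'] cm_fin[OF assms(1-3)]
      unfolding supp_def by auto
    have le: "y a \<le> 0" "y' a \<le> 0" if "a \<in> supp r y" for a
      using that simplex_props(1)[OF y] simplex_props(1)[OF y'] unfolding supp_def by auto
    have fk: "\<bar>y k\<bar> \<noteq> \<infinity>" "\<bar>y' k\<bar> \<noteq> \<infinity>" "\<bar>cm r A k\<bar> \<noteq> \<infinity>" using fin[OF True] by auto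
    have f0: "\<bar>y' j0\<bar> \<noteq> \<infinity>" "\<bar>cm r A j0\<bar> \<noteq> \<infinity>" using fin[OF j0s(1)] by auto
    have f1: "\<bar>y j1\<bar> \<noteq> \<infinity>" "\<bar>cm r A j1\<bar> \<noteq> \<infinity>" using fin[OF j0s(2)] by auto
    define ck where "ck = real_of_ereal (cm r A k)"
    define c0 where "c0 = real_of_ereal (cm r A j0)"
    define c1 where "c1 = real_of_ereal (cm r A j1)"
    define yk where "yk = real_of_ereal (y k)"
    define yk' where "yk' = real_of_ereal (y' k)"
    define y1 where "y1 = real_of_ereal (y j1)"
    define y0' where "y0' = real_of_ereal (y' j0)"
    have eqs: "cm r A k = ereal ck" "cm r A j0 = ereal c0" "cm r A j1 = ereal c1"
      "y k = ereal yk" "y' k = ereal yk'" "y j1 = ereal y1" "y' j0 = ereal y0'"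
      unfolding ck_def c0_def c1_def yk_def yk'_def y1_def y0'_def
      using fk f0 f1 by (simp_all add: ereal_real')
    have e1: "ereal ck + ereal yk = ereal c0 + 0" using E[OF True j0s(1)] j0(2) eqs by simp
    have e2: "ereal ck + ereal yk = ereal c1 + ereal y1" using E[OF True j0s(2)] eqs by simp
    have e3: "ereal ck + ereal yk' = ereal c0 + ereal y0'" using E'[OF True j0s(1)] eqs by simp
    have e4: "ereal ck + ereal yk' = ereal c1 + 0" using E'[OF True j0s(2)] j1(2) eqs by simp
    have l1: "ereal y1 \<le> 0" using le(1)[OF j0s(2)] eqs by simp
    have l2: "ereal y0' \<le> 0" using le(2)[OF j0s(1)] eqs by simp
    have r1: "ck + yk = c0" "ck + yk = c1 + y1" "ck + yk' = c0 + y0'" "ck + yk' = c1"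
      "y1 \<le> 0" "y0' \<le> 0" using e1 e2 e3 e4 l1 l2 by simp_all
    then have "yk = yk'" by linarith
    then show ?thesis using eqs by simp
  qed
qed

lemma supp_sub: "supp r x \<subseteq> {..<r}" unfolding supp_def by auto

lemma best_sub: "best r A y \<subseteq> supp r y" unfolding best_def supp_def by auto

lemma nash_struct:
  assumes "trop_matrix r P" and "trop_matrix r Q"
    and "cols_nonbot r P" and "cols_nonbot r (trop_transpose Q)"
    and "cols_unique_max r P" and "cols_unique_max r (trop_transpose Q)"
    and N: "trop_nash r P Q x y"
  shows "best r P y = supp r y" "best r (trop_transpose Q) x = supp r x"
    "supp r y = sig r (trop_transpose Q) ` supp r x"
proof -
  define Qt where "Qt = trop_transpose Q"
  have mQt: "trop_matrix r Qt" using assms(2) unfolding trop_matrix_def Qt_def trop_transpose_def by auto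
  have x: "x \<in> trop_simplex r" and y: "y \<in> trop_simplex r" using N unfolding trop_nash_def by auto
  have S1: "supp r x \<subseteq> sig r P ` best r P y"
  proof
    fix i assume "i \<in> supp r x"
    then have "i < r" "x i > -\<infinity>" unfolding supp_def by auto
    then have "\<forall>k<r. trop_mv r P y k \<le> trop_mv r P y i" using N unfolding trop_nash_def by auto
    then show "i \<in> sig r P ` best r P y"
      using argmax_in_best[OF assms(1,3,5) y \<open>i < r\<close>] by auto
  qed
  have S2: "supp r y \<subseteq> sig r Qt ` best r Qt x"
  proof
    fix i assume "i \<in> supp r y"
    then have "i < r" "y i > -\<infinity>" unfolding supp_def by auto
    then have "\<forall>k<r. trop_mv r Qt x k \<le> trop_mv r Qt x i" using N unfolding trop_nash_def Qt_def by auto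
    then show "i \<in> sig r Qt ` best r Qt x"
      using argmax_in_best[OF mQt assms(4,6)[folded Qt_def] x \<open>i < r\<close>] by auto
  qed
  have fin: "finite (supp r z)" for z by (rule finite_subset[OF supp_sub]) simp
  have finb: "finite (best r A z)" for A z by (rule finite_subset[OF best_sub fin])
  have c1: "card (supp r x) \<le> card (best r P y)"
    using card_mono[OF finite_imageI[OF finb] S1] card_image_le[OF finb, of "sig r P" P y] by linarith
  have c2: "card (best r P y) \<le> card (supp r y)" using card_mono[OF fin best_sub] .
  have c3: "card (supp r y) \<le> card (best r Qt x)"
    using card_mono[OF finite_imageI[OF finb] S2] card_image_le[OF finb, of "sig r Qt" Qt x] by linarith
  have c4: "card (best r Qt x) \<le> card (supp r x)" using card_mono[OF fin best_sub] .
  show "best r P y = supp r y"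
    by (rule card_subset_eq[OF fin best_sub]) (use c1 c2 c3 c4 in linarith)
  have bq: "best r Qt x = supp r x"
    by (rule card_subset_eq[OF fin best_sub]) (use c1 c2 c3 c4 in linarith)
  then show "best r (trop_transpose Q) x = supp r x" unfolding Qt_def .
  have sub: "supp r y \<subseteq> sig r Qt ` supp r x" using S2 bq by simp
  have "card (sig r Qt ` supp r x) \<le> card (supp r y)"
    using card_image_le[OF fin, of "sig r Qt" x] c1 c2 by linarith
  then have "supp r y = sig r Qt ` supp r x" using card_seteq[OF finite_imageI[OF fin] sub] by blast
  then show "supp r y = sig r (trop_transpose Q) ` supp r x" unfolding Qt_def .
qed

theorem proposition6p2:
  fixes r :: nat and P Q :: "nat \<Rightarrow> nat \<Rightarrow> ereal"
  assumes "trop_matrix r P" and "trop_matrix r Q"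
    and "cols_nonbot r P" and "cols_nonbot r (trop_transpose Q)"
    and "cols_unique_max r P" and "cols_unique_max r (trop_transpose Q)"
  shows "finite {(x, y). trop_nash r P Q x y}
         \<and> card {(x, y). trop_nash r P Q x y} \<le> 2 ^ r - 1"
proof -
  define E where "E = {(x, y). trop_nash r P Q x y}"
  define f where "f = (\<lambda>(x::nat \<Rightarrow> ereal, y::nat \<Rightarrow> ereal). supp r x)"
  define B where "B = Pow {..<r} - {{}}"
  have mQt: "trop_matrix r (trop_transpose Q)"
    using assms(2) unfolding trop_matrix_def trop_transpose_def by auto
  have inj: "inj_on f E"
  proof (rule inj_onI)
    fix a b assume a: "a \<in> E" and b: "b \<in> E" and fe: "f a = f b"
    obtain x y where ab: "a = (x, y)" by (cases a)
    obtain x' y' where bb: "b = (x', y')" by (cases b)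
    have N: "trop_nash r P Q x y" "trop_nash r P Q x' y'" using a b ab bb unfolding E_def by auto
    have s: "supp r x = supp r x'" using fe ab bb unfolding f_def by simp
    note st = nash_struct[OF assms N(1)] and st' = nash_struct[OF assms N(2)]
    have sy: "supp r y = supp r y'" using st(3) st'(3) s by simp
    have "x = x'"
      by (rule best_unique[OF mQt assms(4,6)]) (use N st st' s in \<open>auto simp: trop_nash_def\<close>)
    moreover have "y = y'"
      by (rule best_unique[OF assms(1,3,5)]) (use N st st' sy in \<open>auto simp: trop_nash_def\<close>)
    ultimately show "a = b" using ab bb by simp
  qed
  have img: "f ` E \<subseteq> B"
  proof
    fix s assume "s \<in> f ` E"
    then obtain x y where N: "trop_nash r P Q x y" and s: "s = supp r x" unfolding E_def f_def by auto
    have x: "x \<in> trop_simplex r" using N unfolding trop_nash_def by auto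
    obtain k where "k < r" "x k = 0" using simplex_props(2)[OF x] by auto
    then have "k \<in> s" unfolding s supp_def by auto
    then show "s \<in> B" unfolding B_def using supp_sub s by auto
  qed
  have finB: "finite B" unfolding B_def by auto
  have cB: "card B = 2 ^ r - 1" unfolding B_def by (simp add: card_Diff_subset card_Pow)
  have finE: "finite E" using finite_imageD[OF finite_subset[OF img finB] inj] .
  have "card E \<le> card B" using card_inj_on_le[OF inj img finB] .
  then show ?thesis using finE cB unfolding E_def by simp
qed

end
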